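(* Let $G$ be an abelian group. A function $\phi:G\to\mathbb{H}$ is an extreme point of $\mathcal{P}^{\mathbb{H}}_*(G)$ if and only if $\phi$ is a group homomorphism from $G$ to $\mathbb{S}$. In other words, the extreme boundary of $\mathcal{P}^{\mathbb{H}}_*(G)$ equals the quaternionic dual $G^\delta=\mathrm{Hom}(G,\mathbb{S})$.
   Context: $\mathbb{H}$ is the real quaternion algebra and $\mathbb{S}=\{q\in\mathbb{H}:|q|=1\}$ is the (nonabelian) multiplicative group of unit quaternions. For an abelian group $G$, $\phi:G\to\mathbb{H}$ is positive definite if for all $k$, $g_1,\dots,g_k\in G$, $q_1,\dots,q_k\in\mathbb{H}$, $\sum_{i,j=1}^k\overline{q_i}\,\phi(g_j-g_i)\,q_j$ is a nonnegative real number. $\mathcal{P}^{\mathbb{H}}_*(G)$ is the convex set of positive definite $\phi:G\to\mathbb{H}$ with $\phi(0)=1$. The quaternionic dual $G^\delta$ is the set of all group homomorphisms $G\to\mathbb{S}$ (quaternionic characters). *)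

theory Defs
  imports "HOL-Analysis.Analysis" "HOL-Library.Function_Algebras"
begin

codatatype quat = Quat (qRe: real) (qI: real) (qJ: real) (qK: real)

lemma quat_eqI [intro?]:
  "qRe x = qRe y \<Longrightarrow> qI x = qI y \<Longrightarrow> qJ x = qJ y \<Longrightarrow> qK x = qK y \<Longrightarrow> x = y"
  by (rule quat.expand) simp

lemma quat_eq_iff: "x = y \<longleftrightarrow> qRe x = qRe y \<and> qI x = qI y \<and> qJ x = qJ y \<and> qK x = qK y"
  by (auto intro: quat.expand)

instantiation quat :: real_algebra_1
begin

primcorec zero_quat where
  "qRe 0 = 0" | "qI 0 = 0" | "qJ 0 = 0" | "qK 0 = 0"

primcorec plus_quat where
  "qRe (x + y) = qRe x + qRe y" | "qI (x + y) = qI x + qI y"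
| "qJ (x + y) = qJ x + qJ y" | "qK (x + y) = qK x + qK y"

primcorec uminus_quat where
  "qRe (- x) = - qRe x" | "qI (- x) = - qI x" | "qJ (- x) = - qJ x" | "qK (- x) = - qK x"

primcorec minus_quat where
  "qRe (x - y) = qRe x - qRe y" | "qI (x - y) = qI x - qI y"
| "qJ (x - y) = qJ x - qJ y" | "qK (x - y) = qK x - qK y"

primcorec scaleR_quat where
  "qRe (scaleR r x) = r * qRe x" | "qI (scaleR r x) = r * qI x"
| "qJ (scaleR r x) = r * qJ x" | "qK (scaleR r x) = r * qK x"

primcorec one_quat where
  "qRe 1 = 1" | "qI 1 = 0" | "qJ 1 = 0" | "qK 1 = 0"

primcorec times_quat where
  "qRe (a * b) = qRe a * qRe b - qI a * qI b - qJ a * qJ b - qK a * qK b"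
| "qI (a * b) = qRe a * qI b + qI a * qRe b + qJ a * qK b - qK a * qJ b"
| "qJ (a * b) = qRe a * qJ b - qI a * qK b + qJ a * qRe b + qK a * qI b"
| "qK (a * b) = qRe a * qK b + qI a * qJ b - qJ a * qI b + qK a * qRe b"

instance
  by standard (auto simp: quat_eq_iff algebra_simps)

end

text \<open>Pointwise real vector space structure on functions (needed to speak of
  convex combinations and extreme points of sets of functions).\<close>

instantiation "fun" :: (type, real_vector) real_vector
begin
definition scaleR_fun :: "real \<Rightarrow> ('a \<Rightarrow> 'b) \<Rightarrow> 'a \<Rightarrow> 'b" where
  "scaleR_fun r f = (\<lambda>x. r *\<^sub>R f x)"
instance
  by standard (auto simp: scaleR_fun_def fun_eq_iff scaleR_add_right scaleR_add_left)
end

primcorec qcnj :: "quat \<Rightarrow> quat" where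
  "qRe (qcnj q) = qRe q" | "qI (qcnj q) = - qI q" | "qJ (qcnj q) = - qJ q" | "qK (qcnj q) = - qK q"

definition qnorm :: "quat \<Rightarrow> real" where
  "qnorm q = sqrt ((qRe q)\<^sup>2 + (qI q)\<^sup>2 + (qJ q)\<^sup>2 + (qK q)\<^sup>2)"

definition unit_quats :: "quat set" where
  "unit_quats = {q. qnorm q = 1}"

definition quat_pos_def :: "('g::ab_group_add \<Rightarrow> quat) \<Rightarrow> bool" where
  "quat_pos_def \<phi> \<longleftrightarrow>
     (\<forall>(k::nat) (g::nat \<Rightarrow> 'g) (q::nat \<Rightarrow> quat).
        \<exists>r::real. r \<ge> 0 \<and>
          (\<Sum>i<k. \<Sum>j<k. qcnj (q i) * \<phi> (g j - g i) * q j) = of_real r)"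

definition quat_pos_def_normalized :: "('g::ab_group_add \<Rightarrow> quat) set" where
  "quat_pos_def_normalized = {\<phi>. quat_pos_def \<phi> \<and> \<phi> 0 = 1}"

definition quat_dual :: "('g::ab_group_add \<Rightarrow> quat) set" where
  "quat_dual = {\<phi>. (\<forall>x. \<phi> x \<in> unit_quats) \<and> (\<forall>x y. \<phi> (x + y) = \<phi> x * \<phi> y)}"

end

theory Submission
  imports Defs
begin


lemma qof_real_sel[simp]: "qRe (of_real r) = r" "qI (of_real r) = 0" "qJ (of_real r) = 0" "qK (of_real r) = 0"
  by (simp_all add: of_real_def)

lemma qsum_sel[simp]:
  "qRe (sum f A) = (\<Sum>x\<in>A. qRe (f x))" "qI (sum f A) = (\<Sum>x\<in>A. qI (f x))"
  "qJ (sum f A) = (\<Sum>x\<in>A. qJ (f x))" "qK (sum f A) = (\<Sum>x\<in>A. qK (f x))"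
  by (induction A rule: infinite_finite_induct; simp)+

lemma qcnj_sum: "qcnj (sum f A) = (\<Sum>x\<in>A. qcnj (f x))"
  by (simp add: quat_eq_iff sum_negf)

lemma qcnj_mult: "qcnj (a * b) = qcnj b * qcnj a"
  by (simp add: quat_eq_iff algebra_simps)

lemma real_quat_iff: "(\<exists>r::real. r \<ge> 0 \<and> X = of_real r) \<longleftrightarrow> qRe X \<ge> 0 \<and> qI X = 0 \<and> qJ X = 0 \<and> qK X = 0"
  by (auto simp: quat_eq_iff intro!: exI[of _ "qRe X"])

definition nsq :: "quat \<Rightarrow> real" where
  "nsq q = (qRe q)\<^sup>2 + (qI q)\<^sup>2 + (qJ q)\<^sup>2 + (qK q)\<^sup>2"

lemma qcnj_mult_self: "qcnj q * q = of_real (nsq q)" "q * qcnj q = of_real (nsq q)"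
  by (simp_all add: quat_eq_iff nsq_def power2_eq_square algebra_simps)

lemma nsq_nonneg: "nsq q \<ge> 0" by (simp add: nsq_def)

lemma unit_quats_iff: "q \<in> unit_quats \<longleftrightarrow> nsq q = 1"
  unfolding unit_quats_def qnorm_def nsq_def by auto

definition PDs :: "('g::ab_group_add \<Rightarrow> quat) \<Rightarrow> nat \<Rightarrow> (nat \<Rightarrow> 'g) \<Rightarrow> (nat \<Rightarrow> quat) \<Rightarrow> quat" where
  "PDs \<phi> k g q = (\<Sum>i<k. \<Sum>j<k. qcnj (q i) * \<phi> (g j - g i) * q j)"

lemma quat_pos_def_iff: "quat_pos_def \<phi> \<longleftrightarrow> (\<forall>k g q. qRe (PDs \<phi> k g q) \<ge> 0 \<and> qI (PDs \<phi> k g q) = 0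
   \<and> qJ (PDs \<phi> k g q) = 0 \<and> qK (PDs \<phi> k g q) = 0)"
  unfolding quat_pos_def_def PDs_def real_quat_iff[symmetric] by blast

lemma pd_inst: "quat_pos_def \<phi> \<Longrightarrow> \<exists>r\<ge>0. PDs \<phi> k g q = of_real r"
  unfolding quat_pos_def_def PDs_def by blast

lemma pd2:
  assumes "quat_pos_def \<phi>"
  shows "\<exists>r\<ge>0. \<phi> 0 + \<phi> x * q + qcnj q * \<phi> (-x) + qcnj q * \<phi> 0 * q = of_real r"
proof -
  from pd_inst[OF assms, of 2 "\<lambda>i. if i = 0 then 0 else x" "\<lambda>i. if i = 0 then 1 else q"]
  obtain r where r: "r \<ge> 0" "PDs \<phi> 2 (\<lambda>i. if i = 0 then 0 else x) (\<lambda>i. if i = 0 then 1 else q) = of_real r"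
    by blast
  have "qcnj 1 = 1" by (simp add: quat_eq_iff)
  with r show ?thesis by (auto simp: PDs_def numeral_2_eq_2 lessThan_Suc algebra_simps)
qed

lemma pd1:
  assumes "quat_pos_def \<phi>"
  shows "qRe (\<phi> 0) \<ge> 0 \<and> qI (\<phi> 0) = 0 \<and> qJ (\<phi> 0) = 0 \<and> qK (\<phi> 0) = 0"
proof -
  from pd_inst[OF assms, of 1 "\<lambda>i. 0" "\<lambda>i. 1"]
  obtain r where r: "r \<ge> 0" "PDs \<phi> 1 (\<lambda>i. 0) (\<lambda>i. 1) = of_real r"
    by blast
  have "qcnj 1 = 1" by (simp add: quat_eq_iff)
  with r show ?thesis by (auto simp: PDs_def quat_eq_iff)
qed

lemma pd2c:
  assumes "quat_pos_def \<phi>"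
  shows "let T = \<phi> 0 + \<phi> x * q + qcnj q * \<phi> (-x) + qcnj q * \<phi> 0 * q in
     qRe T \<ge> 0 \<and> qI T = 0 \<and> qJ T = 0 \<and> qK T = 0"
  using pd2[OF assms, of x q] unfolding Let_def real_quat_iff[symmetric] by blast

lemma pd_herm:
  assumes "quat_pos_def \<phi>"
  shows "qRe (\<phi> (-x)) = qRe (\<phi> x)" "qI (\<phi> (-x)) = - qI (\<phi> x)"
    "qJ (\<phi> (-x)) = - qJ (\<phi> x)" "qK (\<phi> (-x)) = - qK (\<phi> x)"
proof -
  note p0 = pd1[OF assms]
  have a: "qI (\<phi> (-x)) = - qI (\<phi> x) \<and> qJ (\<phi> (-x)) = - qJ (\<phi> x) \<and> qK (\<phi> (-x)) = - qK (\<phi> x)"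
    using pd2c[OF assms, of x 1] p0 by (simp add: Let_def)
  have b: "qRe (\<phi> (-x)) = qRe (\<phi> x)"
    using pd2c[OF assms, of x "Quat 0 1 0 0"] p0 by (simp add: Let_def)
  show "qRe (\<phi> (-x)) = qRe (\<phi> x)" "qI (\<phi> (-x)) = - qI (\<phi> x)"
    "qJ (\<phi> (-x)) = - qJ (\<phi> x)" "qK (\<phi> (-x)) = - qK (\<phi> x)" using a b by auto
qed

lemma pd_neg: "quat_pos_def \<phi> \<Longrightarrow> \<phi> (-x) = qcnj (\<phi> x)"
  using pd_herm[of \<phi> x] by (simp add: quat_eq_iff)

lemma pd_bound0:
  assumes "quat_pos_def \<phi>"
  shows "qRe (\<phi> 0) - 2 * nsq (\<phi> x) + qRe (\<phi> 0) * nsq (\<phi> x) \<ge> 0"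
proof -
  note p0 = pd1[OF assms]
  define A where "A = \<phi> x"
  define c where "c = qRe (\<phi> 0)"
  have e0: "\<phi> 0 = of_real c" using p0 by (simp add: quat_eq_iff c_def)
  have "qRe (\<phi> 0 + \<phi> x * (- qcnj A) + qcnj (- qcnj A) * \<phi> (-x) + qcnj (- qcnj A) * \<phi> 0 * (- qcnj A)) \<ge> 0"
    using pd2c[OF assms, of x "- qcnj A"] by (simp add: Let_def)
  then show ?thesis
    by (simp add: pd_neg[OF assms] e0 A_def[symmetric] c_def[symmetric] nsq_def power2_eq_square algebra_simps)
qed

lemma pd_bound:
  assumes "quat_pos_def \<phi>" "\<phi> 0 = 1"
  shows "nsq (\<phi> x) \<le> 1"
  using pd_bound0[OF assms(1), of x] assms(2) by simp

lemma pd_zero: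
  assumes "quat_pos_def \<phi>" "qRe (\<phi> 0) = 0"
  shows "\<phi> x = 0"
proof -
  have "nsq (\<phi> x) = 0" using pd_bound0[OF assms(1), of x] assms(2) nsq_nonneg[of "\<phi> x"] by simp
  then show ?thesis by (simp add: nsq_def quat_eq_iff add_nonneg_eq_0_iff)
qed



lemma qcnj_scaleR: "qcnj (c *\<^sub>R x) = c *\<^sub>R qcnj x" by (simp add: quat_eq_iff)
lemma qcnj_one[simp]: "qcnj 1 = 1" by (simp add: quat_eq_iff)

lemma char_basic:
  assumes "\<phi> \<in> quat_dual"
  shows "\<phi> 0 = 1" "\<phi> (-x) = qcnj (\<phi> x)"
proof -
  have u: "\<And>y. qcnj (\<phi> y) * \<phi> y = 1" "\<And>y. \<phi> y * qcnj (\<phi> y) = 1"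
    using assms by (auto simp: quat_dual_def unit_quats_iff qcnj_mult_self)
  have m: "\<And>x y. \<phi> (x + y) = \<phi> x * \<phi> y" using assms by (auto simp: quat_dual_def)
  have "1 = qcnj (\<phi> 0) * (\<phi> 0 * \<phi> 0)" using m[of 0 0] u(1)[of 0] by simp
  also have "\<dots> = \<phi> 0" using u(1)[of 0] by (simp flip: mult.assoc)
  finally show z: "\<phi> 0 = 1" by simp
  have "\<phi> (-x) = \<phi> (-x) * (\<phi> x * qcnj (\<phi> x))" using u(2)[of x] by simp
  also have "\<dots> = \<phi> (-x + x) * qcnj (\<phi> x)" by (simp add: m[of "-x" x, symmetric] flip: mult.assoc)
  also have "\<dots> = qcnj (\<phi> x)" using z by simp
  finally show "\<phi> (-x) = qcnj (\<phi> x)" .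
qed

lemma char_pd:
  assumes "\<phi> \<in> quat_dual"
  shows "\<phi> \<in> quat_pos_def_normalized"
proof -
  have m: "\<And>x y. \<phi> (x + y) = \<phi> x * \<phi> y" using assms by (auto simp: quat_dual_def)
  have "quat_pos_def \<phi>"
    unfolding quat_pos_def_def
  proof (intro allI)
    fix k :: nat and g :: "nat \<Rightarrow> 'a" and q :: "nat \<Rightarrow> quat"
    define S where "S = (\<Sum>j<k. \<phi> (g j) * q j)"
    have "(\<Sum>i<k. \<Sum>j<k. qcnj (q i) * \<phi> (g j - g i) * q j)
        = (\<Sum>i<k. \<Sum>j<k. qcnj (\<phi> (g i) * q i) * (\<phi> (g j) * q j))"
    proof (intro sum.cong refl)
      fix i j
      have "\<phi> (g j - g i) = \<phi> (- g i + g j)" by (simp add: algebra_simps)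
      also have "\<dots> = qcnj (\<phi> (g i)) * \<phi> (g j)" by (subst m) (simp add: char_basic[OF assms])
      finally show "qcnj (q i) * \<phi> (g j - g i) * q j = qcnj (\<phi> (g i) * q i) * (\<phi> (g j) * q j)"
        by (simp add: qcnj_mult mult.assoc)
    qed
    also have "\<dots> = qcnj S * S" unfolding S_def qcnj_sum sum_product ..
    also have "\<dots> = of_real (nsq S)" by (simp add: qcnj_mult_self)
    finally show "\<exists>r\<ge>0. (\<Sum>i<k. \<Sum>j<k. qcnj (q i) * \<phi> (g j - g i) * q j) = of_real r"
      using nsq_nonneg by blast
  qed
  then show ?thesis using char_basic[OF assms] by (simp add: quat_pos_def_normalized_def)
qed

lemma pd_scale:
  assumes "quat_pos_def \<psi>" "c \<ge> 0"
  shows "quat_pos_def (c *\<^sub>R \<psi>)"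
proof -
  have "PDs (c *\<^sub>R \<psi>) k g q = c *\<^sub>R PDs \<psi> k g q" for k g q
    by (simp add: PDs_def scaleR_fun_def scaleR_sum_right)
  then show ?thesis using assms by (simp add: quat_pos_def_iff)
qed

lemma sum2: "(\<Sum>i<2*(k::nat). h i) = (\<Sum>i<k. h (2*i) + h (2*i+1))"
  by (induction k) (simp_all add: algebra_simps)

lemma pd_shift:
  assumes "quat_pos_def \<phi>" "c * c = 1"
  shows "quat_pos_def (\<lambda>x. 2 *\<^sub>R \<phi> x + c *\<^sub>R (\<phi> (x + a) + \<phi> (x - a)))"
    (is "quat_pos_def ?\<psi>")
proof -
  have "PDs ?\<psi> k g q = PDs \<phi> (2*k) (\<lambda>i. g (i div 2) + (if even i then 0 else a))
           (\<lambda>i. if even i then q (i div 2) else c *\<^sub>R q (i div 2))" for k g q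
  proof -
    let ?g = "(\<lambda>i. g (i div 2) + (if even i then 0 else a))"
    let ?q = "(\<lambda>i. if even i then q (i div 2) else c *\<^sub>R q (i div 2))"
    have "PDs \<phi> (2*k) ?g ?q = (\<Sum>i<k. \<Sum>j<k.
        (qcnj (q i) * \<phi> (g j - g i) * q j + qcnj (q i) * \<phi> ((g j + a) - g i) * (c *\<^sub>R q j))
      + (qcnj (c *\<^sub>R q i) * \<phi> (g j - (g i + a)) * q j + qcnj (c *\<^sub>R q i) * \<phi> ((g j + a) - (g i + a)) * (c *\<^sub>R q j)))"
      unfolding PDs_def sum2 by (simp add: sum.distrib)
    also have "\<dots> = PDs ?\<psi> k g q"
      unfolding PDs_def
    proof (intro sum.cong refl)
      fix i j
      have e1: "(g j + a) - g i = (g j - g i) + a" "g j - (g i + a) = (g j - g i) - a"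
         "(g j + a) - (g i + a) = g j - g i" by (simp_all add: algebra_simps)
      show "(qcnj (q i) * \<phi> (g j - g i) * q j + qcnj (q i) * \<phi> ((g j + a) - g i) * (c *\<^sub>R q j))
      + (qcnj (c *\<^sub>R q i) * \<phi> (g j - (g i + a)) * q j + qcnj (c *\<^sub>R q i) * \<phi> ((g j + a) - (g i + a)) * (c *\<^sub>R q j))
        = qcnj (q i) * ?\<psi> (g j - g i) * q j"
        unfolding e1 qcnj_scaleR using assms(2)
        by (simp add: algebra_simps scaleR_add_right scaleR_2)
    qed
    finally show ?thesis by simp
  qed
  then show ?thesis using assms(1) by (simp add: quat_pos_def_iff)
qed

lemma ext_split:
  assumes "\<phi> extreme_point_of S" "\<psi>1 \<in> S" "\<psi>2 \<in> S" "0 < t" "t < 1"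
    "\<phi> = t *\<^sub>R \<psi>1 + (1 - t) *\<^sub>R \<psi>2"
  shows "\<psi>1 = \<psi>2"
proof (rule ccontr)
  assume "\<psi>1 \<noteq> \<psi>2"
  then have "\<phi> \<in> open_segment \<psi>2 \<psi>1" using assms(4-6) unfolding in_segment
    by (auto intro!: exI[of _ t] simp: add.commute)
  then show False using assms(1-3) by (auto simp: extreme_point_of_def)
qed



lemma qnum_sel[simp]: "qRe (numeral n) = numeral n" "qI (numeral n) = 0" "qJ (numeral n) = 0" "qK (numeral n) = 0"
  by (metis of_real_numeral qof_real_sel)+

lemma ext_D:
  assumes E: "\<phi> extreme_point_of quat_pos_def_normalized"
  shows "\<phi> (x + a) + \<phi> (x - a) = (2 * qRe (\<phi> a)) *\<^sub>R \<phi> x"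
proof -
  have inS: "\<phi> \<in> quat_pos_def_normalized" using E by (simp add: extreme_point_of_def)
  then have pd: "quat_pos_def \<phi>" and z: "\<phi> 0 = 1" by (auto simp: quat_pos_def_normalized_def)
  define r where "r = qRe (\<phi> a)"
  define pp where "pp = (\<lambda>x. 2 *\<^sub>R \<phi> x + 1 *\<^sub>R (\<phi> (x + a) + \<phi> (x - a)))"
  define pm where "pm = (\<lambda>x. 2 *\<^sub>R \<phi> x + (-1) *\<^sub>R (\<phi> (x + a) + \<phi> (x - a)))"
  have pdp: "quat_pos_def pp" unfolding pp_def by (rule pd_shift[OF pd]) simp
  have pdm: "quat_pos_def pm" unfolding pm_def by (rule pd_shift[OF pd]) simp
  have herm: "qRe (\<phi> (-a)) = r" "qI (\<phi> (-a)) = - qI (\<phi> a)" "qJ (\<phi> (-a)) = - qJ (\<phi> a)" "qK (\<phi> (-a)) = - qK (\<phi> a)"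
    using pd_herm[OF pd, of a] by (simp_all add: r_def)
  have pp0: "pp 0 = of_real (2 + 2 * r)" using herm z by (simp add: pp_def quat_eq_iff r_def)
  have pm0: "pm 0 = of_real (2 - 2 * r)" using herm z by (simp add: pm_def quat_eq_iff r_def)
  have r1: "2 + 2 * r \<ge> 0" using pd1[OF pdp] pp0 by simp
  have r2: "2 - 2 * r \<ge> 0" using pd1[OF pdm] pm0 by simp
  consider "r = 1" | "r = -1" | "-1 < r \<and> r < 1" using r1 r2 by linarith
  then show ?thesis
  proof cases
    case 1
    then have "pm x = 0" using pd_zero[OF pdm] pm0 by simp
    then show ?thesis using 1 by (simp add: pm_def quat_eq_iff r_def[symmetric])
  next
    case 2
    then have "pp x = 0" using pd_zero[OF pdp] pp0 by simp
    then show ?thesis using 2 by (simp add: pp_def quat_eq_iff r_def[symmetric])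
  next
    case 3
    define p1 where "p1 = (1 / (2 + 2 * r)) *\<^sub>R pp"
    define p2 where "p2 = (1 / (2 - 2 * r)) *\<^sub>R pm"
    have s1: "p1 \<in> quat_pos_def_normalized" unfolding quat_pos_def_normalized_def p1_def
      using pd_scale[OF pdp, of "1 / (2 + 2 * r)"] 3 pp0
      by (simp add: scaleR_fun_def quat_eq_iff)
    have s2: "p2 \<in> quat_pos_def_normalized" unfolding quat_pos_def_normalized_def p2_def
      using pd_scale[OF pdm, of "1 / (2 - 2 * r)"] 3 pm0
      by (simp add: scaleR_fun_def quat_eq_iff)
    have "\<phi> = ((1 + r) / 2) *\<^sub>R p1 + (1 - (1 + r) / 2) *\<^sub>R p2"
    proof
      fix y
      have a1: "(1 + r) / (4 + 4 * r) = 1/4" "(1 - (1 + r) / 2) / (2 - 2 * r) = 1/4"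
        using 3 by (simp_all add: field_simps)
      have "(((1 + r) / 2) *\<^sub>R p1 + (1 - (1 + r) / 2) *\<^sub>R p2) y = (1/4) *\<^sub>R pp y + (1/4) *\<^sub>R pm y"
        unfolding p1_def p2_def scaleR_fun_def plus_fun_def by (simp add: a1)
      also have "\<dots> = \<phi> y" by (simp add: pp_def pm_def quat_eq_iff algebra_simps)
      finally show "\<phi> y = (((1 + r) / 2) *\<^sub>R p1 + (1 - (1 + r) / 2) *\<^sub>R p2) y" by simp
    qed
    then have "p1 = p2" using ext_split[OF E s1 s2, of "(1 + r) / 2"] 3 by simp
    then have "p1 x = p2 x" by simp
    then have "(1 / (2 + 2 * r)) *\<^sub>R pp x = (1 / (2 - 2 * r)) *\<^sub>R pm x"
      by (simp add: p1_def p2_def scaleR_fun_def)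
    then have "(2 - 2 * r) *\<^sub>R pp x = (2 + 2 * r) *\<^sub>R pm x"
      using 3 by (simp add: quat_eq_iff field_simps)
    then show ?thesis
      by (simp add: pp_def pm_def quat_eq_iff r_def[symmetric] algebra_simps)
  qed
qed



lemma R_inst:
  assumes R: "\<And>x a. p (x + a) + p (x - a) = 2 * r a * (p x :: real)"
  shows "x' = x + a \<Longrightarrow> y' = x - a \<Longrightarrow> p x' + p y' = 2 * r a * p (x :: 'g::ab_group_add)"
  using R by simp

lemma comp_par:
  fixes r p :: "'g::ab_group_add \<Rightarrow> real"
  assumes R: "\<And>x a. r (x + a) + r (x - a) = 2 * r a * r x"
    and P: "\<And>x a. p (x + a) + p (x - a) = 2 * r a * p x"
    and odd: "\<And>x. p (-x) = - p x"
  shows "(r (b + b) - 1) * p z = (r (z + b) - r (z - b)) * p b"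
proof -
  have 1: "p (z + (b+b)) + p (z - (b+b)) = 2 * r (b+b) * p z" by (rule P)
  have 2: "p ((b+b) - z) + p (- z - (b+b)) = 2 * r (b+b) * p (-z)" by (rule R_inst[OF P]) (simp_all add: algebra_simps)
  have 3: "p (z + (b+b)) + p (-z) = 2 * r (z+b) * p b" by (rule R_inst[OF P]) (simp_all add: algebra_simps)
  have 4: "p z + p ((b+b) - z) = 2 * r (z-b) * p b" by (rule R_inst[OF P]) (simp_all add: algebra_simps)
  have 5: "p (z - (b+b)) + p (-z) = 2 * r (z-b) * p (-b)" by (rule R_inst[OF P]) (simp_all add: algebra_simps)
  have 6: "p z + p (- z - (b+b)) = 2 * r (z+b) * p (-b)" by (rule R_inst[OF P]) (simp_all add: algebra_simps)
  have e1: "- z - (b+b) = - (z + (b+b))" "(b+b) - z = - (z - (b+b))" by (simp_all add: algebra_simps)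
  have o1: "p (- z - (b+b)) = - p (z + (b+b))" unfolding e1 by (rule odd)
  have o2: "p ((b+b) - z) = - p (z - (b+b))" unfolding e1 by (rule odd)
  show ?thesis using 1 2 3 4 5 6 o1 o2 odd[of z] odd[of b] by (simp add: algebra_simps)
qed

lemma dal_facts:
  fixes r :: "'g::ab_group_add \<Rightarrow> real"
  assumes R: "\<And>x a. r (x + a) + r (x - a) = 2 * r a * r x"
    and ev: "\<And>x. r (-x) = r x" and r0: "r 0 = 1"
    and rb: "(r b)\<^sup>2 < 1"
  defines "s \<equiv> sqrt (1 - (r b)\<^sup>2)"
  defines "l \<equiv> \<lambda>x. (r (x - b) - r (x + b)) / (2 * s)"
  shows "(l x)\<^sup>2 + (r x)\<^sup>2 = 1" "r (x + y) = r x * r y - l x * l y"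
    "l (x + y) = r x * l y + l x * r y" "l b = s" "s > 0"
proof -
  have dbl: "r (x + x) = 2 * (r x)\<^sup>2 - 1" for x using R[of x x] r0 by (simp add: power2_eq_square)
  have spos: "s > 0" unfolding s_def using rb by simp
  have s2: "s\<^sup>2 = 1 - (r b)\<^sup>2" unfolding s_def using rb by simp
  show "s > 0" by (rule spos)
  {
    have sum: "r (x + b) + r (x - b) = 2 * r b * r x" by (rule R)
    have prod: "r (x + x) + r (b + b) = 2 * r (x - b) * r (x + b)" by (rule R_inst[OF R]) (simp_all add: algebra_simps)
    have "(r (x - b) - r (x + b))\<^sup>2 = (r (x + b) + r (x - b))\<^sup>2 - 2 * (2 * r (x - b) * r (x + b))"
      by (simp add: power2_eq_square algebra_simps)
    also have "\<dots> = 4 * (1 - (r x)\<^sup>2) * s\<^sup>2" unfolding sum prod[symmetric] dbl s2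
      by (simp add: power2_eq_square algebra_simps)
    finally have e: "(r (x - b) - r (x + b))\<^sup>2 = 4 * (1 - (r x)\<^sup>2) * s\<^sup>2" .
    have "(l x)\<^sup>2 = (r (x - b) - r (x + b))\<^sup>2 / (4 * s\<^sup>2)" by (simp add: l_def power_divide power2_eq_square)
    also have "\<dots> = 1 - (r x)\<^sup>2" unfolding e using spos by (simp add: field_simps)
    finally show "(l x)\<^sup>2 + (r x)\<^sup>2 = 1" by simp
  }
  {
    have A1: "r ((x + y) - (b + b)) + r (x - y) = 2 * r (y - b) * r (x - b)" by (rule R_inst[OF R]) (simp_all add: algebra_simps)
    have A2: "r (x + y) + r ((x - y) - (b + b)) = 2 * r (y + b) * r (x - b)" by (rule R_inst[OF R]) (simp_all add: algebra_simps)
    have A3: "r (x + y) + r ((x - y) + (b + b)) = 2 * r (y - b) * r (x + b)" by (rule R_inst[OF R]) (simp_all add: algebra_simps)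
    have A4: "r ((x + y) + (b + b)) + r (x - y) = 2 * r (y + b) * r (x + b)" by (rule R_inst[OF R]) (simp_all add: algebra_simps)
    have A5: "r ((x + y) + (b + b)) + r ((x + y) - (b + b)) = 2 * r (b + b) * r (x + y)" by (rule R)
    have A6: "r ((x - y) + (b + b)) + r ((x - y) - (b + b)) = 2 * r (b + b) * r (x - y)" by (rule R)
    have "2 * ((r (x - b) - r (x + b)) * (r (y - b) - r (y + b))) = (2 - 2 * r (b + b)) * (r (x - y) - r (x + y))"
      using A1 A2 A3 A4 A5 A6 by (simp add: algebra_simps)
    then have "(r (x - b) - r (x + b)) * (r (y - b) - r (y + b)) = 4 * s\<^sup>2 * ((r (x - y) - r (x + y)) / 2)"
      unfolding dbl s2 by (simp add: field_simps)
    then have ll: "l x * l y = (r (x - y) - r (x + y)) / 2"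
      unfolding l_def using spos by (simp add: field_simps power2_eq_square)
    have "r (x + y) + r (x - y) = 2 * r y * r x" by (rule R)
    then show "r (x + y) = r x * r y - l x * l y" unfolding ll by (simp add: field_simps)
  }
  {
    have B1: "r ((x + y) - b) + r ((x + b) - y) = 2 * r x * r (y - b)"
      using R[of "y - b" x] ev[of "(y - b) - x"] by (simp add: algebra_simps)
    have B2: "r ((x + y) + b) + r ((x - b) - y) = 2 * r x * r (y + b)"
      using R[of "y + b" x] ev[of "(y + b) - x"] by (simp add: algebra_simps)
    have B3: "r ((x + y) - b) + r ((x - b) - y) = 2 * r y * r (x - b)" by (rule R_inst[OF R]) (simp_all add: algebra_simps)
    have B4: "r ((x + y) + b) + r ((x + b) - y) = 2 * r y * r (x + b)" by (rule R_inst[OF R]) (simp_all add: algebra_simps)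
    have "2 * s * (r x * l y + l x * r y) = r x * (r (y - b) - r (y + b)) + r y * (r (x - b) - r (x + b))"
      unfolding l_def using spos by (simp add: field_simps)
    also have "\<dots> = r ((x + y) - b) - r ((x + y) + b)" using B1 B2 B3 B4 by (simp add: algebra_simps)
    also have "\<dots> = 2 * s * l (x + y)" unfolding l_def using spos by simp
    finally show "l (x + y) = r x * l y + l x * r y" using spos by simp
  }
  {
    have "l b = (1 - r (b + b)) / (2 * s)" unfolding l_def using r0 by simp
    also have "\<dots> = s\<^sup>2 / s" unfolding dbl s2 using spos by (simp add: field_simps)
    also have "\<dots> = s" using spos by (simp add: power2_eq_square)
    finally show "l b = s" .
  }
qed



lemma nsq_convex:
  "nsq ((1 - u) *\<^sub>R A + u *\<^sub>R B) = (1 - u) * nsq A + u * nsq B - u * (1 - u) * nsq (A - B)"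
  by (simp add: nsq_def power2_eq_square algebra_simps)

lemma nsq_zero: "nsq A = 0 \<Longrightarrow> A = 0"
  by (simp add: nsq_def quat_eq_iff add_nonneg_eq_0_iff)

lemma dual_extreme:
  assumes "\<phi> \<in> quat_dual"
  shows "\<phi> extreme_point_of quat_pos_def_normalized"
  unfolding extreme_point_of_def
proof (intro conjI ballI notI)
  show "\<phi> \<in> quat_pos_def_normalized" by (rule char_pd[OF assms])
  fix a b assume a: "a \<in> quat_pos_def_normalized" and b: "b \<in> quat_pos_def_normalized"
    and "\<phi> \<in> open_segment a b"
  then obtain u where ab: "a \<noteq> b" and u: "0 < u" "u < 1" and phi: "\<phi> = (1 - u) *\<^sub>R a + u *\<^sub>R b"
    unfolding in_segment by blast
  have "a x = b x" for x
  proof -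
    have "nsq (a x) \<le> 1" "nsq (b x) \<le> 1" using a b pd_bound by (auto simp: quat_pos_def_normalized_def)
    moreover have "nsq (\<phi> x) = 1" using assms by (auto simp: quat_dual_def unit_quats_iff)
    moreover have "\<phi> x = (1 - u) *\<^sub>R a x + u *\<^sub>R b x" using phi by (simp add: scaleR_fun_def)
    ultimately have e: "1 = (1 - u) * nsq (a x) + u * nsq (b x) - u * (1 - u) * nsq (a x - b x)"
      and n1: "nsq (a x) \<le> 1" and n2: "nsq (b x) \<le> 1"
      using nsq_convex[of u "a x" "b x"] by auto
    have "(1 - u) * nsq (a x) \<le> (1 - u) * 1" using n1 u by (intro mult_left_mono) auto
    moreover have "u * nsq (b x) \<le> u * 1" using n2 u by (intro mult_left_mono) auto
    moreover have "\<And>P Q R. P \<le> (1 - u) * 1 \<Longrightarrow> Q \<le> u * 1 \<Longrightarrow> 1 = P + Q - R \<Longrightarrow> R \<le> (0::real)" by (simp; linarith)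
    ultimately have "u * (1 - u) * nsq (a x - b x) \<le> 0" using e by blast
    moreover have "u * (1 - u) > 0" using u by simp
    ultimately have "nsq (a x - b x) \<le> 0" using u by (auto simp: mult_le_0_iff)
    then have "nsq (a x - b x) = 0" using nsq_nonneg by (metis antisym)
    then show ?thesis using nsq_zero by fastforce
  qed
  with ab show False by auto
qed

lemma chi_dual:
  fixes r l :: "'g::ab_group_add \<Rightarrow> real"
  assumes L1: "\<And>x. (l x)\<^sup>2 + (r x)\<^sup>2 = 1" and L2: "\<And>x y. r (x + y) = r x * r y - l x * l y"
    and L3: "\<And>x y. l (x + y) = r x * l y + l x * r y"
    and u: "u1\<^sup>2 + u2\<^sup>2 + u3\<^sup>2 = 1"
  shows "(\<lambda>z. Quat (r z) (l z * u1) (l z * u2) (l z * u3)) \<in> quat_dual"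
proof -
  have "nsq (Quat (r z) (l z * u1) (l z * u2) (l z * u3)) = 1" for z
  proof -
    have "nsq (Quat (r z) (l z * u1) (l z * u2) (l z * u3)) = (r z)\<^sup>2 + (l z)\<^sup>2 * (u1\<^sup>2 + u2\<^sup>2 + u3\<^sup>2)"
      by (simp add: nsq_def power_mult_distrib algebra_simps)
    then show ?thesis using L1[of z] u by simp
  qed
  moreover have "Quat (r (x + y)) (l (x + y) * u1) (l (x + y) * u2) (l (x + y) * u3)
     = Quat (r x) (l x * u1) (l x * u2) (l x * u3) * Quat (r y) (l y * u1) (l y * u2) (l y * u3)" for x y
  proof -
    have "l x * u1 * (l y * u1) + l x * u2 * (l y * u2) + l x * u3 * (l y * u3) = l x * l y * (u1\<^sup>2 + u2\<^sup>2 + u3\<^sup>2)"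
      by (simp add: power2_eq_square algebra_simps)
    then have k: "l x * u1 * (l y * u1) + l x * u2 * (l y * u2) + l x * u3 * (l y * u3) = l x * l y" using u by simp
    show ?thesis unfolding L2 L3 quat_eq_iff using k by (simp add: algebra_simps)
  qed
  ultimately show ?thesis by (simp add: quat_dual_def unit_quats_iff)
qed



lemma extreme_dual:
  assumes E: "\<phi> extreme_point_of (quat_pos_def_normalized :: ('g::ab_group_add \<Rightarrow> quat) set)"
  shows "\<phi> \<in> quat_dual"
proof -
  have inS: "\<phi> \<in> quat_pos_def_normalized" using E by (simp add: extreme_point_of_def)
  then have pd: "quat_pos_def \<phi>" and z: "\<phi> 0 = 1" by (auto simp: quat_pos_def_normalized_def)
  define r where "r = (\<lambda>x. qRe (\<phi> x))"
  define pI where "pI = (\<lambda>x. qI (\<phi> x))"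
  define pJ where "pJ = (\<lambda>x. qJ (\<phi> x))"
  define pK where "pK = (\<lambda>x. qK (\<phi> x))"
  have Dx: "\<And>x a. \<phi> (x + a) + \<phi> (x - a) = (2 * r a) *\<^sub>R \<phi> x" using ext_D[OF E] by (simp add: r_def)
  have R: "\<And>x a. r (x + a) + r (x - a) = 2 * r a * r x"
    using arg_cong[where f=qRe, OF Dx] by (simp add: r_def)
  have PI: "\<And>x a. pI (x + a) + pI (x - a) = 2 * r a * pI x"
    using arg_cong[where f=qI, OF Dx] by (simp add: pI_def)
  have PJ: "\<And>x a. pJ (x + a) + pJ (x - a) = 2 * r a * pJ x"
    using arg_cong[where f=qJ, OF Dx] by (simp add: pJ_def)
  have PK: "\<And>x a. pK (x + a) + pK (x - a) = 2 * r a * pK x"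
    using arg_cong[where f=qK, OF Dx] by (simp add: pK_def)
  have ev: "\<And>x. r (-x) = r x" and oI: "\<And>x. pI (-x) = - pI x" and oJ: "\<And>x. pJ (-x) = - pJ x"
    and oK: "\<And>x. pK (-x) = - pK x" using pd_herm[OF pd] by (simp_all add: r_def pI_def pJ_def pK_def)
  have r0: "r 0 = 1" using z by (simp add: r_def)
  have bnd: "\<And>x. (r x)\<^sup>2 + (pI x)\<^sup>2 + (pJ x)\<^sup>2 + (pK x)\<^sup>2 \<le> 1"
    using pd_bound[OF pd z] by (simp add: nsq_def r_def pI_def pJ_def pK_def)
  have phiq: "\<And>x. \<phi> x = Quat (r x) (pI x) (pJ x) (pK x)"
    by (simp add: quat_eq_iff r_def pI_def pJ_def pK_def)
  show ?thesis
  proof (cases "\<exists>b. (r b)\<^sup>2 < 1")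
    case False
    then have r1: "\<And>x. (r x)\<^sup>2 = 1" and i0: "\<And>x. pI x = 0 \<and> pJ x = 0 \<and> pK x = 0"
    proof -
      fix x
      have "(r x)\<^sup>2 \<ge> 1" using False not_less by blast
      moreover note bnd[of x]
      moreover have "(pI x)\<^sup>2 \<ge> 0" "(pJ x)\<^sup>2 \<ge> 0" "(pK x)\<^sup>2 \<ge> 0" by simp_all
      ultimately have "(r x)\<^sup>2 = 1" "(pI x)\<^sup>2 = 0" "(pJ x)\<^sup>2 = 0" "(pK x)\<^sup>2 = 0" by linarith+
      then show "(r x)\<^sup>2 = 1" "pI x = 0 \<and> pJ x = 0 \<and> pK x = 0" by auto
    qed
    have mult: "r (x + y) = r x * r y" for x y
    proof -
      have h: "r (x + y) + r (x - y) = 2 * (r y * r x)" using R[of x y] by simp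
      define t where "t = r y * r x"
      have t2: "t * t = 1" using r1[of x] r1[of y] by (simp add: t_def power2_eq_square algebra_simps)
      have u2: "r (x + y) * r (x + y) = 1" "r (x - y) * r (x - y) = 1" using r1 by (simp_all add: power2_eq_square)
      have v: "r (x - y) = 2 * t - r (x + y)" using h t_def by simp
      have "t * r (x + y) = 1" using u2(2) t2 u2(1) unfolding v by (auto simp: algebra_simps)
      then have "t * (t * r (x + y)) = t" by simp
      then have "r (x + y) = t" using t2 by (simp flip: mult.assoc)
      then show ?thesis by (simp add: t_def)
    qed
    show ?thesis unfolding quat_dual_def unit_quats_iff
      by (auto simp: phiq i0 nsq_def r1 mult quat_eq_iff)
  next
    case True
    then obtain b where rb: "(r b)\<^sup>2 < 1" by blast
    define s where "s = sqrt (1 - (r b)\<^sup>2)"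
    define l where "l = (\<lambda>x. (r (x - b) - r (x + b)) / (2 * s))"
    have df: "\<And>x. (l x)\<^sup>2 + (r x)\<^sup>2 = 1" "\<And>x y. r (x + y) = r x * r y - l x * l y"
      "\<And>x y. l (x + y) = r x * l y + l x * r y" "l b = s" "s > 0"
      unfolding l_def s_def by (rule dal_facts[OF R ev r0 rb])+
    have spos: "s > 0" by (rule df(5))
    have s2: "s\<^sup>2 = 1 - (r b)\<^sup>2" unfolding s_def using rb by simp
    have dbl: "r (b + b) = 2 * (r b)\<^sup>2 - 1" using R[of b b] r0 by (simp add: power2_eq_square)
    have par: "p z = l z * (p b / s)"
      if P: "\<And>x a. p (x + a) + p (x - a) = 2 * r a * p x" and odd: "\<And>x. p (-x) = - p x" for p z
    proof -
      have c: "(r (b + b) - 1) * p z = (r (z + b) - r (z - b)) * p b" by (rule comp_par[OF R P odd])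
      then have "(- 2 * s\<^sup>2) * p z = (r (z + b) - r (z - b)) * p b" unfolding dbl s2 by (simp add: algebra_simps)
      then show ?thesis unfolding l_def using spos by (simp add: field_simps power2_eq_square)
    qed
    define w1 where "w1 = pI b / s"
    define w2 where "w2 = pJ b / s"
    define w3 where "w3 = pK b / s"
    define chi where "chi = (\<lambda>u1 u2 u3 z. Quat (r z) (l z * u1) (l z * u2) (l z * u3))"
    have chiD: "u1\<^sup>2 + u2\<^sup>2 + u3\<^sup>2 = 1 \<Longrightarrow> chi u1 u2 u3 \<in> quat_dual" for u1 u2 u3
      unfolding chi_def by (rule chi_dual[OF df(1-3)])
    have phic: "\<phi> = chi w1 w2 w3"
    proof
      fix z show "\<phi> z = chi w1 w2 w3 z"
        unfolding phiq chi_def w1_def w2_def w3_def using par[OF PI oI, of z] par[OF PJ oJ, of z] par[OF PK oK, of z] by simp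
    qed
    define W where "W = w1\<^sup>2 + w2\<^sup>2 + w3\<^sup>2"
    have "(r b)\<^sup>2 + s\<^sup>2 * W \<le> 1"
    proof -
      have "pI b = s * w1" "pJ b = s * w2" "pK b = s * w3" unfolding w1_def w2_def w3_def using spos by simp_all
      then show ?thesis using bnd[of b] unfolding W_def by (simp add: power_mult_distrib algebra_simps)
    qed
    then have "s\<^sup>2 * W \<le> s\<^sup>2 * 1" unfolding s2 by simp
    then have W1: "W \<le> 1" using spos by simp
    have W0: "W \<ge> 0" unfolding W_def by simp
    show ?thesis
    proof (cases "W = 1")
      case True
      then show ?thesis unfolding phic by (intro chiD) (simp add: W_def)
    next
      case False
      with W1 have Wl: "W < 1" by simp
      define n where "n = sqrt W"
      have n0: "n \<ge> 0" "n < 1" using W0 Wl by (simp_all add: n_def)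
      obtain u1 u2 u3 where uu: "u1\<^sup>2 + u2\<^sup>2 + u3\<^sup>2 = 1" and wu: "w1 = n * u1" "w2 = n * u2" "w3 = n * u3"
      proof (cases "n = 0")
        case True
        then have "W = 0" using W0 by (simp add: n_def)
        then have "w1 = 0" "w2 = 0" "w3 = 0" unfolding W_def by (simp_all add: add_nonneg_eq_0_iff)
        then show ?thesis using that[of 1 0 0] True by simp
      next
        case False
        then have np: "n > 0" using n0 by simp
        have nn: "n\<^sup>2 = W" unfolding n_def using W0 by simp
        show ?thesis
        proof (rule that[of "w1 / n" "w2 / n" "w3 / n"])
          show "(w1 / n)\<^sup>2 + (w2 / n)\<^sup>2 + (w3 / n)\<^sup>2 = 1"
          proof -
            have "(w1 / n)\<^sup>2 + (w2 / n)\<^sup>2 + (w3 / n)\<^sup>2 = W / n\<^sup>2"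
              unfolding W_def by (simp add: power_divide add_divide_distrib)
            moreover have "W \<noteq> 0" using nn np by (metis power_not_zero less_irrefl)
            ultimately show ?thesis using nn by simp
          qed
        qed (use np in simp_all)
      qed
      let ?t = "(1 + n) / 2"
      have split: "\<phi> = ?t *\<^sub>R chi u1 u2 u3 + (1 - ?t) *\<^sub>R chi (-u1) (-u2) (-u3)"
      proof
        fix z
        show "\<phi> z = (?t *\<^sub>R chi u1 u2 u3 + (1 - ?t) *\<^sub>R chi (-u1) (-u2) (-u3)) z"
          unfolding phic chi_def wu scaleR_fun_def plus_fun_def
          by (simp add: quat_eq_iff field_simps)
      qed
      have "chi u1 u2 u3 = chi (-u1) (-u2) (-u3)"
        using ext_split[OF E char_pd[OF chiD[OF uu]] char_pd[OF chiD], of "-u1" "-u2" "-u3" ?t] uu n0 split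
        by simp
      then have "chi u1 u2 u3 b = chi (-u1) (-u2) (-u3) b" by simp
      then have "s * u1 = - (s * u1) \<and> s * u2 = - (s * u2) \<and> s * u3 = - (s * u3)"
        by (simp add: chi_def df(4))
      then have "u1 = 0" "u2 = 0" "u3 = 0" using spos by simp_all
      then show ?thesis using uu by simp
    qed
  qed
qed

theorem mainTheorem11:
  fixes \<phi> :: "'g::ab_group_add \<Rightarrow> quat"
  shows "\<phi> extreme_point_of (quat_pos_def_normalized :: ('g \<Rightarrow> quat) set) \<longleftrightarrow> \<phi> \<in> quat_dual"
  using extreme_dual dual_extreme by blast

end
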